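(* $\mathfrak{L}(\mathrm{rtDVA}(1))\subsetneq\mathfrak{L}(\mathrm{rtDVA}(2))$.
   Context: $\mathfrak{L}(A)$ denotes the class of languages recognized by machines of type $A$. A real-time deterministic vector automaton of dimension $k$ ($\mathrm{rtDVA}(k)$) is a 6-tuple $(Q,\Sigma,\delta,q_0,Q_a,v)$ with finite state set $Q$, initial state $q_0$, accept states $Q_a$, initial row vector $v\in\mathbb{Q}^k$ (freely chosen), and $\delta:Q\times(\Sigma\cup\{\cent,\$\})\times\{=,\neq\}\to Q\times S$, $S$ the set of $k\times k$ rational matrices. The input $w$ is read as $\cent w\$$ left to right, one symbol per step; in state $q$ reading $\sigma$, with $\omega$ equal to "$=$" iff the first vector entry equals $1$, if $\delta(q,\sigma,\omega)=(q',M)$ the machine goes to $q'$ and multiplies its row vector on the right by $M$. Acceptance: after processing $\$$, the state is in $Q_a$ and the first vector entry equals $1$. *)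

theory Defs
  imports Main "Jordan_Normal_Form.Matrix"
begin

text \<open>Tape symbols: input letters (alphabet letters are natural numbers, an
alphabet is a finite set of them), the left end-marker cent and the right
end-marker dollar.\<close>
datatype tsym = Sym nat | Cent | Dollar

text \<open>The transition function takes a state, a tape symbol and a Boolean which is
True iff the first vector entry equals 1 (the "=" outcome).\<close>
record rtdva =
  states :: "nat set"
  delta  :: "nat \<Rightarrow> tsym \<Rightarrow> bool \<Rightarrow> nat \<times> rat mat"
  init   :: nat
  accs   :: "nat set"
  ivec   :: "rat vec"

definition is_rtDVA :: "nat \<Rightarrow> nat set \<Rightarrow> rtdva \<Rightarrow> bool" where
  "is_rtDVA k Sg M \<longleftrightarrow>
     finite (states M) \<and> init M \<in> states M \<and> accs M \<subseteq> states M \<and>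
     ivec M \<in> carrier_vec k \<and>
     (\<forall>q \<in> states M. \<forall>s \<in> Sym ` Sg \<union> {Cent, Dollar}. \<forall>b.
        fst (delta M q s b) \<in> states M \<and> snd (delta M q s b) \<in> carrier_mat k k)"

text \<open>Row vector v multiplied on the right by the matrix A.\<close>
definition row_mult :: "rat vec \<Rightarrow> rat mat \<Rightarrow> rat vec" where
  "row_mult v A = transpose_mat A *\<^sub>v v"

definition step :: "rtdva \<Rightarrow> nat \<times> rat vec \<Rightarrow> tsym \<Rightarrow> nat \<times> rat vec" where
  "step M c s = (let (q, v) = c; (q', A) = delta M q s (v $ 0 = 1) in (q', row_mult v A))"

definition run :: "rtdva \<Rightarrow> nat list \<Rightarrow> nat \<times> rat vec" where
  "run M w = foldl (step M) (init M, ivec M) (Cent # map Sym w @ [Dollar])"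

definition accepts :: "rtdva \<Rightarrow> nat list \<Rightarrow> bool" where
  "accepts M w \<longleftrightarrow> fst (run M w) \<in> accs M \<and> snd (run M w) $ 0 = 1"

definition lang :: "nat set \<Rightarrow> rtdva \<Rightarrow> nat list set" where
  "lang Sg M = {w \<in> lists Sg. accepts M w}"

definition rtDVA_langs :: "nat \<Rightarrow> (nat set \<times> nat list set) set" where
  "rtDVA_langs k = {(Sg, L). finite Sg \<and> (\<exists>M. is_rtDVA k Sg M \<and> L = lang Sg M)}"

end

theory Submission
  imports Defs
begin


lemma row_mult_0:
  assumes "A \<in> carrier_mat (dim_vec v) n" "0 < n"
  shows "row_mult v A $ 0 = (\<Sum>j<dim_vec v. A $$ (j,0) * v $ j)"
  using assms unfolding row_mult_def
  by (auto simp: mult_mat_vec_def scalar_prod_def row_def atLeast0LessThan intro!: sum.cong)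

lemma row_mult_carrier: "v \<in> carrier_vec k \<Longrightarrow> A \<in> carrier_mat k k \<Longrightarrow> row_mult v A \<in> carrier_vec k"
  by (simp add: row_mult_def)

lemma row_mult_1: "v \<in> carrier_vec 1 \<Longrightarrow> A \<in> carrier_mat 1 1 \<Longrightarrow> row_mult v A $ 0 = A $$ (0,0) * v $ 0"
  by (subst row_mult_0[where n=1]) auto

lemma step_inv:
  assumes "is_rtDVA k Sg M" "q \<in> states M" "v \<in> carrier_vec k" "s \<in> Sym`Sg \<union> {Cent,Dollar}"
  shows "fst (step M (q,v) s) \<in> states M \<and> snd (step M (q,v) s) \<in> carrier_vec k"
  using assms unfolding is_rtDVA_def step_def
  by (auto simp: case_prod_beta intro!: row_mult_carrier)

definition aff :: "rat \<Rightarrow> rat \<Rightarrow> rat mat" where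
  "aff a b = mat 2 2 (\<lambda>(i,j). if i=0 \<and> j=0 then a else if i=1 \<and> j=0 then b else if i=1 \<and> j=1 then 1 else 0)"
definition pv :: "rat \<Rightarrow> rat vec" where "pv x = vec 2 (\<lambda>i. if i=0 then x else 1)"

lemma row_mult_aff: "row_mult (pv x) (aff a b) = pv (a*x+b)"
  unfolding row_mult_def pv_def aff_def
  by (rule eq_vecI) (auto simp: mult_mat_vec_def scalar_prod_def row_def numeral_2_eq_2 less_Suc_eq)

definition emb :: "rat mat \<Rightarrow> rat mat" where
  "emb A = mat 2 2 (\<lambda>(i,j). if i=0 \<and> j=0 then A$$(0,0) else 0)"

lemma row_mult_emb: "v \<in> carrier_vec 2 \<Longrightarrow> row_mult v (emb A) $ 0 = A $$ (0,0) * v $ 0"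
  unfolding row_mult_def emb_def
  by (auto simp: mult_mat_vec_def scalar_prod_def row_def numeral_2_eq_2 atLeast0LessThan lessThan_Suc)

lemma prod_upd:
  fixes f :: "rat \<Rightarrow> nat"
  assumes "finite S" "m \<in> S"
  shows "(\<Prod>s\<in>S. s ^ (f(m := Suc (f m))) s) = m * (\<Prod>s\<in>S. s ^ f s)"
proof -
  have "(\<Prod>s\<in>S. s ^ (f(m := Suc (f m))) s) = m ^ Suc (f m) * (\<Prod>s\<in>S-{m}. s ^ (f(m := Suc (f m))) s)"
    by (subst prod.remove[OF assms]) simp
  also have "(\<Prod>s\<in>S-{m}. s ^ (f(m := Suc (f m))) s) = (\<Prod>s\<in>S-{m}. s ^ f s)"
    by (rule prod.cong) auto
  also have "(\<Prod>s\<in>S. s ^ f s) = m ^ f m * (\<Prod>s\<in>S-{m}. s ^ f s)"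
    by (subst prod.remove[OF assms]) simp
  ultimately show ?thesis by simp
qed

lemma piE_upd: "f \<in> S \<rightarrow>\<^sub>E {0..n} \<Longrightarrow> m \<in> S \<Longrightarrow> f(m := Suc (f m)) \<in> S \<rightarrow>\<^sub>E {0..Suc n}"
  by (auto simp: PiE_iff extensional_def)

lemma exp_beats_poly: "\<exists>n::nat. c * (n+2)^k < 2^n"
proof -
  define m where "m = c + 2*k + 1"
  define j where "j = 2*m"
  define n where "n = (2::nat)^j"
  have j1: "j \<ge> 1" unfolding j_def m_def by simp
  have "(2::nat) \<le> 2^j" using j1 by (metis power_increasing power_one_right zero_less_numeral one_le_numeral)
  then have "n + 2 \<le> 2^(j+1)" unfolding n_def by simp
  then have A: "(n+2)^k \<le> (2^(j+1))^k" by (rule power_mono) simp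
  have B: "c \<le> 2^c" using less_exp[of c] by simp
  have C: "c * (n+2)^k \<le> 2^c * (2^(j+1))^k" using A B by (meson mult_le_mono)
  have D: "(2::nat)^c * (2^(j+1))^k = 2^(c + (j+1)*k)" by (simp add: power_add power_mult mult.commute)
  have E: "c + (j+1)*k < (m+1)^2"
    unfolding j_def m_def by (simp add: power2_eq_square algebra_simps)
  have "m+1 \<le> 2^m" using less_exp[of m] by (simp add: Suc_le_eq)
  then have "(m+1)^2 \<le> (2^m)^2" by (rule power_mono) simp
  also have "\<dots> = 2^j" unfolding j_def by (simp add: power_mult mult.commute)
  finally have F: "c + (j+1)*k < 2^j" using E by simp
  have G: "(2::nat)^(c + (j+1)*k) < 2^n" unfolding n_def using F by (rule power_strict_increasing) simp
  have "c * (n+2)^k < 2^n" using le_less_trans[OF C[unfolded D] G] .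
  then show ?thesis by blast
qed



definition lift :: "rtdva \<Rightarrow> rtdva" where
  "lift M = \<lparr>states = states M, delta = (\<lambda>q s b. (fst (delta M q s b), emb (snd (delta M q s b)))),
     init = init M, accs = accs M, ivec = vec 2 (\<lambda>i. if i = 0 then ivec M $ 0 else 0)\<rparr>"

lemma emb_carrier: "emb A \<in> carrier_mat 2 2" by (simp add: emb_def)

lemma lift_rtDVA: "is_rtDVA 1 Sg M \<Longrightarrow> is_rtDVA 2 Sg (lift M)"
  unfolding is_rtDVA_def lift_def by (auto simp: emb_carrier)

lemma lift_step:
  assumes "is_rtDVA 1 Sg M" "q \<in> states M" "v \<in> carrier_vec 1" "v' \<in> carrier_vec 2" "v' $ 0 = v $ 0"
    "s \<in> Sym`Sg \<union> {Cent,Dollar}"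
  shows "fst (step (lift M) (q,v') s) = fst (step M (q,v) s) \<and>
         snd (step (lift M) (q,v') s) $ 0 = snd (step M (q,v) s) $ 0"
proof -
  have A: "snd (delta M q s (v$0 = 1)) \<in> carrier_mat 1 1"
    using assms unfolding is_rtDVA_def by blast
  show ?thesis using assms(3,4,5) A
    by (simp add: step_def lift_def case_prod_beta row_mult_emb row_mult_1)
qed

lemma lift_run:
  assumes "is_rtDVA 1 Sg M" "set xs \<subseteq> Sym`Sg \<union> {Cent,Dollar}"
  shows "\<And>q v v'. q \<in> states M \<Longrightarrow> v \<in> carrier_vec 1 \<Longrightarrow> v' \<in> carrier_vec 2 \<Longrightarrow> v' $ 0 = v $ 0 \<Longrightarrow>
    fst (foldl (step (lift M)) (q,v') xs) = fst (foldl (step M) (q,v) xs) \<and>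
    snd (foldl (step (lift M)) (q,v') xs) $ 0 = snd (foldl (step M) (q,v) xs) $ 0"
  using assms(2)
proof (induction xs)
  case Nil
  then show ?case by simp
next
  case (Cons s xs)
  obtain q1 v1 where e1: "step M (q,v) s = (q1,v1)" by fastforce
  obtain q2 v2 where e2: "step (lift M) (q,v') s = (q2,v2)" by fastforce
  have s: "s \<in> Sym`Sg \<union> {Cent,Dollar}" using Cons by auto
  have i1: "q1 \<in> states M \<and> v1 \<in> carrier_vec 1" using step_inv[OF assms(1) Cons.prems(1,2) s] e1 by simp
  have i2: "v2 \<in> carrier_vec 2" using step_inv[OF lift_rtDVA[OF assms(1)], of q v' s] Cons.prems e1 e2 s
    by (simp add: lift_def)
  have "q2 = q1 \<and> v2 $ 0 = v1 $ 0" using lift_step[OF assms(1) Cons.prems(1-4) s] e1 e2 by simp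
  then show ?case using Cons.IH[of q1 v1 v2] i1 i2 e1 e2 Cons.prems by simp
qed

lemma lift_lang: "is_rtDVA 1 Sg M \<Longrightarrow> lang Sg (lift M) = lang Sg M"
proof -
  assume M: "is_rtDVA 1 Sg M"
  have "accepts (lift M) w = accepts M w" if w: "w \<in> lists Sg" for w
  proof -
    have set: "set (Cent # map Sym w @ [Dollar]) \<subseteq> Sym`Sg \<union> {Cent,Dollar}" using w by auto
    have "init M \<in> states M" "ivec M \<in> carrier_vec 1" using M unfolding is_rtDVA_def by auto
    then have "fst (run (lift M) w) = fst (run M w) \<and> snd (run (lift M) w) $ 0 = snd (run M w) $ 0"
      using lift_run[OF M set, of "init M" "ivec M" "ivec (lift M)"]
      unfolding run_def by (simp add: lift_def)
    then show ?thesis unfolding accepts_def by (simp add: lift_def)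
  qed
  then show ?thesis unfolding lang_def by auto
qed

lemma incl: "rtDVA_langs 1 \<subseteq> rtDVA_langs 2"
  unfolding rtDVA_langs_def using lift_rtDVA lift_lang by fastforce



fun coef :: "tsym \<Rightarrow> rat \<times> rat" where
  "coef (Sym b) = (if b=0 then (2,0) else if b=1 then (2,1) else if b=2 then (1,-1) else (1,0))"
| "coef Cent = (1,0)" | "coef Dollar = (1,0)"

definition F :: "rat \<Rightarrow> nat \<Rightarrow> rat" where
  "F x b = fst (coef (Sym b)) * x + snd (coef (Sym b))"

definition G :: "int \<Rightarrow> nat \<Rightarrow> int" where "G x b = 2*x + int b"

definition M2 :: rtdva where
  "M2 = \<lparr>states = {0}, delta = (\<lambda>q s b. (0, aff (fst (coef s)) (snd (coef s)))),
     init = 0, accs = {0}, ivec = pv 1\<rparr>"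

lemma M2_rtDVA: "is_rtDVA 2 Sg M2"
  unfolding is_rtDVA_def M2_def by (auto simp: pv_def aff_def)

lemma M2_step: "step M2 (0, pv x) s = (0, pv (fst (coef s) * x + snd (coef s)))"
  by (simp add: step_def M2_def row_mult_aff)

lemma M2_fold: "foldl (step M2) (0, pv x) (map Sym u) = (0, pv (foldl F x u))"
  by (induction u arbitrary: x) (simp_all add: M2_step F_def)

lemma M2_accepts: "accepts M2 u \<longleftrightarrow> foldl F 1 u = 1"
proof -
  have i: "init M2 = 0" "ivec M2 = pv 1" "accs M2 = {0}" by (simp_all add: M2_def)
  have "run M2 u = (0, pv (foldl F 1 u))"
    unfolding run_def by (simp add: i M2_step M2_fold F_def)
  then show ?thesis unfolding accepts_def by (simp add: i pv_def)
qed

lemma F_G: "set w \<subseteq> {0,1} \<Longrightarrow> foldl F (of_int x) w = of_int (foldl G x w)"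
proof (induction w arbitrary: x)
  case Nil
  then show ?case by simp
next
  case (Cons b w)
  have "F (of_int x) b = of_int (G x b)" using Cons.prems by (auto simp: F_def G_def)
  then show ?case using Cons by simp
qed

lemma F_rep: "foldl F x (replicate k 2) = x - of_nat k"
  by (induction k arbitrary: x) (auto simp: F_def)

lemma G_ge1: "x \<ge> 1 \<Longrightarrow> foldl G x w \<ge> 1"
  by (induction w arbitrary: x) (auto simp: G_def)

lemma G_inj: "set w1 \<subseteq> {0,1} \<Longrightarrow> set w2 \<subseteq> {0,1} \<Longrightarrow> length w1 = length w2 \<Longrightarrow>
   foldl G x w1 = foldl G y w2 \<Longrightarrow> x = y \<and> w1 = w2"
proof (induction w1 arbitrary: x y w2)
  case Nil
  then show ?case by simp
next
  case (Cons b1 w1)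
  then obtain b2 w2' where w2: "w2 = b2 # w2'" by (cases w2) auto
  have "2*x + int b1 = 2*y + int b2 \<and> w1 = w2'"
    using Cons.IH[of w2' "2*x + int b1" "2*y + int b2"] Cons.prems w2 by (simp add: G_def)
  moreover have "b1 \<in> {0,1}" "b2 \<in> {0,1}" using Cons.prems w2 by auto
  ultimately have "x = y \<and> b1 = b2" by (auto; presburger)
  then show ?case using w2 \<open>2*x + int b1 = 2*y + int b2 \<and> w1 = w2'\<close> by auto
qed

definition mults :: "rtdva \<Rightarrow> tsym set \<Rightarrow> rat set" where
  "mults M T = (\<lambda>(q,s,b). snd (delta M q s b) $$ (0,0)) ` (states M \<times> T \<times> (UNIV::bool set))"

lemma fold_inv:
  assumes M: "is_rtDVA 1 Sg M" and T: "T \<subseteq> Sym`Sg \<union> {Cent,Dollar}" and fT: "finite T"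
    and q0: "q0 \<in> states M" and v0: "v0 \<in> carrier_vec 1"
  shows "set xs \<subseteq> T \<Longrightarrow> fst (foldl (step M) (q0,v0) xs) \<in> states M \<and>
     snd (foldl (step M) (q0,v0) xs) \<in> carrier_vec 1 \<and>
     (\<exists>f \<in> mults M T \<rightarrow>\<^sub>E {0..length xs}. snd (foldl (step M) (q0,v0) xs) $ 0 = v0 $ 0 * (\<Prod>s\<in>mults M T. s ^ f s))"
proof (induction xs rule: rev_induct)
  case Nil
  have "finite (mults M T)" using M fT unfolding mults_def is_rtDVA_def by simp
  have "(\<lambda>s\<in>mults M T. 0) \<in> mults M T \<rightarrow>\<^sub>E {0..length ([]::tsym list)}" by auto
  moreover have "v0 $ 0 = v0 $ 0 * (\<Prod>s\<in>mults M T. s ^ (\<lambda>s\<in>mults M T. 0) s)" by simp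
  ultimately show ?case using q0 v0 by auto
next
  case (snoc x xs)
  obtain q1 v1 where e: "foldl (step M) (q0,v0) xs = (q1,v1)" by fastforce
  from snoc e obtain f where q1: "q1 \<in> states M" and v1: "v1 \<in> carrier_vec 1"
    and f: "f \<in> mults M T \<rightarrow>\<^sub>E {0..length xs}" and fv: "v1 $ 0 = v0 $ 0 * (\<Prod>s\<in>mults M T. s ^ f s)"
    by auto
  have x: "x \<in> T" using snoc by simp
  have xS: "x \<in> Sym`Sg \<union> {Cent,Dollar}" using x T by auto
  define A where "A = snd (delta M q1 x (v1 $ 0 = 1))"
  define m where "m = A $$ (0,0)"
  have A: "A \<in> carrier_mat 1 1" using M q1 xS unfolding is_rtDVA_def A_def by blast
  have mm: "m \<in> mults M T" unfolding mults_def m_def A_def using q1 x by force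
  have fin: "finite (mults M T)" using M fT unfolding mults_def is_rtDVA_def by simp
  have st: "step M (q1,v1) x = (fst (delta M q1 x (v1 $ 0 = 1)), row_mult v1 A)"
    by (simp add: step_def A_def case_prod_beta)
  have inv: "fst (step M (q1,v1) x) \<in> states M \<and> snd (step M (q1,v1) x) \<in> carrier_vec 1"
    using step_inv[OF M q1 v1 xS] .
  have "row_mult v1 A $ 0 = m * v1 $ 0" using row_mult_1[OF v1 A] m_def by simp
  also have "\<dots> = v0 $ 0 * (\<Prod>s\<in>mults M T. s ^ (f(m := Suc (f m))) s)"
    using fv prod_upd[OF fin mm, of f] by simp
  finally have "snd (step M (q1,v1) x) $ 0 = v0 $ 0 * (\<Prod>s\<in>mults M T. s ^ (f(m := Suc (f m))) s)"
    using st by simp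
  moreover have "f(m := Suc (f m)) \<in> mults M T \<rightarrow>\<^sub>E {0..length (xs @ [x])}"
    using piE_upd[OF f mm] by simp
  ultimately have "\<exists>g \<in> mults M T \<rightarrow>\<^sub>E {0..length (xs @ [x])}. snd (step M (q1,v1) x) $ 0 = v0 $ 0 * (\<Prod>s\<in>mults M T. s ^ g s)"
    by blast
  then show ?case using inv e by simp
qed



lemma not1: "(({0,1,2}::nat set), lang {0,1,2} M2) \<notin> rtDVA_langs 1"
proof
  define Sg :: "nat set" where "Sg = {0,1,2}"
  assume "(({0,1,2}::nat set), lang {0,1,2} M2) \<in> rtDVA_langs 1"
  then obtain M where M: "is_rtDVA 1 Sg M" and L: "lang Sg M2 = lang Sg M"
    unfolding rtDVA_langs_def Sg_def by auto
  define T where "T = {Cent, Sym 0, Sym 1}"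
  have T: "T \<subseteq> Sym`Sg \<union> {Cent,Dollar}" "finite T" unfolding T_def Sg_def by auto
  define S where "S = mults M T"
  define c where "c = ivec M $ 0"
  define C where "C w = foldl (step M) (init M, ivec M) (Cent # map Sym w)" for w
  define W where "W n = {w. set w \<subseteq> {0::nat,1} \<and> length w = n}" for n
  have fS: "finite S" and fQ: "finite (states M)" using M T unfolding S_def mults_def is_rtDVA_def by auto
  have q0: "init M \<in> states M" and v0: "ivec M \<in> carrier_vec 1" using M unfolding is_rtDVA_def by auto
  have runC: "run M (w @ z) = foldl (step M) (C w) (map Sym z @ [Dollar])" for w z
    unfolding run_def C_def by simp
  have accL: "accepts M u \<longleftrightarrow> foldl F 1 u = 1" if "u \<in> lists Sg" for u
  proof -
    have "accepts M u \<longleftrightarrow> u \<in> lang Sg M" using that unfolding lang_def by simp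
    also have "\<dots> \<longleftrightarrow> u \<in> lang Sg M2" using L by simp
    also have "\<dots> \<longleftrightarrow> accepts M2 u" using that unfolding lang_def by simp
    finally show ?thesis using M2_accepts by simp
  qed
  have FG1: "foldl F 1 w = of_int (foldl G 1 w)" if "set w \<subseteq> {0,1}" for w
    using F_G[OF that, of 1] by simp
  have inj: "inj_on C (W n)" for n
  proof (rule inj_onI, rule ccontr)
    fix w1 w2 assume w1: "w1 \<in> W n" and w2: "w2 \<in> W n" and eq: "C w1 = C w2" and ne: "w1 \<noteq> w2"
    define g1 where "g1 = foldl G 1 w1"
    define g2 where "g2 = foldl G 1 w2"
    have "g1 \<noteq> g2" using G_inj[of w1 w2 1 1] w1 w2 ne unfolding W_def g1_def g2_def by auto
    have "g1 \<ge> 1" unfolding g1_def by (rule G_ge1) simp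
    define k where "k = nat (g1 - 1)"
    define z where "z = replicate k (2::nat)"
    have l1: "w1 @ z \<in> lists Sg" "w2 @ z \<in> lists Sg" using w1 w2 unfolding W_def z_def Sg_def by auto
    have "foldl F 1 (w1 @ z) = of_int g1 - of_nat k" using FG1[of w1] w1
      unfolding z_def g1_def W_def by (simp add: F_rep)
    also have "\<dots> = 1" unfolding k_def using \<open>g1 \<ge> 1\<close> by simp
    finally have a1: "accepts M (w1 @ z)" using accL l1 by simp
    have "foldl F 1 (w2 @ z) = of_int g2 - of_nat k" using FG1[of w2] w2
      unfolding z_def g2_def W_def by (simp add: F_rep)
    also have "\<dots> \<noteq> 1" unfolding k_def using \<open>g1 \<ge> 1\<close> \<open>g1 \<noteq> g2\<close> by simp
    finally have a2: "\<not> accepts M (w2 @ z)" using accL l1 by simp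
    show False using a1 a2 eq runC unfolding accepts_def by metis
  qed
  define V where "V n = (\<lambda>f. vec 1 (\<lambda>_. c * (\<Prod>s\<in>S. s ^ f s))) ` (S \<rightarrow>\<^sub>E {0..n})" for n
  have sub: "C ` W n \<subseteq> states M \<times> V (Suc n)" for n
  proof
    fix p assume "p \<in> C ` W n"
    then obtain w where w: "w \<in> W n" and p: "p = C w" by auto
    have set: "set (Cent # map Sym w) \<subseteq> T" using w unfolding W_def T_def by auto
    from fold_inv[OF M T(1) T(2) q0 v0 set] w obtain f where
      "fst p \<in> states M" "snd p \<in> carrier_vec 1" "f \<in> S \<rightarrow>\<^sub>E {0..Suc n}"
      "snd p $ 0 = c * (\<Prod>s\<in>S. s ^ f s)"
      unfolding p C_def S_def c_def W_def by auto
    moreover have "snd p = vec 1 (\<lambda>_. c * (\<Prod>s\<in>S. s ^ f s))"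
      using calculation by (intro eq_vecI) auto
    ultimately show "p \<in> states M \<times> V (Suc n)" unfolding V_def by (cases p) auto
  qed
  have cardV: "card (V (Suc n)) \<le> (n+2) ^ card S" for n
  proof -
    have "card (V (Suc n)) \<le> card (S \<rightarrow>\<^sub>E {0..Suc n})" unfolding V_def by (rule card_image_le) (simp add: fS finite_PiE)
    also have "\<dots> = (n+2) ^ card S" using fS by (simp add: card_PiE)
    finally show ?thesis .
  qed
  obtain n where n: "card (states M) * (n+2) ^ card S < 2^n" using exp_beats_poly by blast
  have "2^n = card (W n)" unfolding W_def using card_lists_length_eq[of "{0::nat,1}" n] by (simp add: numeral_2_eq_2)
  also have "\<dots> = card (C ` W n)" using card_image[OF inj] by simp
  also have "\<dots> \<le> card (states M \<times> V (Suc n))"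
    by (rule card_mono[OF _ sub]) (simp add: fQ V_def fS finite_PiE)
  also have "\<dots> = card (states M) * card (V (Suc n))" by (simp add: card_cartesian_product)
  also have "\<dots> \<le> card (states M) * (n+2) ^ card S" using cardV by simp
  finally show False using n by simp
qed

theorem corollary1:
  shows "rtDVA_langs 1 \<subset> rtDVA_langs 2"
proof -
  have "(({0,1,2}::nat set), lang {0,1,2} M2) \<in> rtDVA_langs 2"
    unfolding rtDVA_langs_def using M2_rtDVA by auto
  then show ?thesis using incl not1 by blast
qed


end
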